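(* For every $c>0$ the sequence $((n+c)^{-6})_{n\in\mathbb Z_+}$ is a Hausdorff moment sequence. For $c>0$ and $n\in\mathbb Z_+$ let $p_c(n)=\sum_{j=0}^n (j+c)^6$. There exists $\delta>0$ such that for every $c\in(1-\delta,1+\delta)$ the sequence $(1/p_c(n))_{n\in\mathbb Z_+}$ is not a Hausdorff moment sequence. Equivalently, with $K_c(z,w)=\sum_{n\ge0}(n+c)^6(z\bar w)^n$ and $S(z,w)=(1-z\bar w)^{-1}$ on the unit disc, $K_c$ is a contractive subnormal kernel for all $c>0$, while the product kernel $SK_c$ is not subnormal for $c$ in a neighborhood of $1$.
   Context: A sequence $(x_n)_{n\in\mathbb Z_+}$ of positive numbers is a Hausdorff moment sequence if there is a positive Radon measure $\mu$ on $[0,1]$ with $x_n=\int_0^1 t^n\,d\mu(t)$ for all $n$. A kernel $K(z,w)=\sum_j a_j(z\bar w)^j$ ($a_j>0$) on the unit disc is a contractive subnormal kernel iff multiplication by $z$ on its reproducing kernel Hilbert space is a contractive subnormal operator, which holds iff $(1/a_n)_{n}$ is a Hausdorff moment sequence. *)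

theory Defs
  imports "HOL-Probability.Probability"
begin

text \<open>A sequence of positive reals is a Hausdorff moment sequence if there is a positive
  finite (= Radon, since [0,1] is compact) Borel measure on the real line concentrated on [0,1]
  whose moments are the terms of the sequence.\<close>
definition hausdorff_moment_seq :: "(nat \<Rightarrow> real) \<Rightarrow> bool" where
  "hausdorff_moment_seq x \<longleftrightarrow>
     (\<forall>n. x n > 0) \<and>
     (\<exists>M :: real measure.
        sets M = sets borel \<and> finite_measure M \<and> emeasure M (- {0..1}) = 0 \<and>
        (\<forall>n. integrable M (\<lambda>t. t ^ n) \<and> x n = (\<integral>t. t ^ n \<partial>M)))"

definition p_c :: "real \<Rightarrow> nat \<Rightarrow> real" where
  "p_c c n = (\<Sum>j=0..n. (real j + c) ^ 6)"

end

theory Submission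
  imports Defs
begin

lemma part1:
  fixes c :: real assumes c: "c > 0"
  shows "hausdorff_moment_seq (\<lambda>n. 1 / (real n + c) ^ 6)"
proof -
  define f where "f s = erlang_density 5 c s / c ^ 6" for s
  define D where "D = density lborel f"
  define M where "M = distr D borel (\<lambda>s. exp (- s))"
  have fm[measurable]: "f \<in> borel_measurable borel" unfolding f_def by measurable
  have fnn: "0 \<le> f s" for s using c by (simp add: f_def)
  have key: "has_bochner_integral lborel (\<lambda>s. f s * exp (- s) ^ n) (1 / (real n + c) ^ 6)" for n
  proof -
    have l: "0 < real n + c" using c by simp
    have eq: "f s * exp (- s) ^ n = erlang_density 5 (real n + c) s / (real n + c) ^ 6" for s
      using c l by (auto simp: f_def erlang_density_def exp_of_nat_mult[symmetric] field_simps
           power_mult_distrib exp_add[symmetric] simp flip: exp_of_nat_mult)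
    have "has_bochner_integral lborel (erlang_density 5 (real n + c)) 1"
      using nn_integral_erlang_ith_moment[OF l, of 5 0]
      using l by (intro has_bochner_integral_nn_integral) (auto intro!: AE_I2)
    then have "has_bochner_integral lborel (\<lambda>s. erlang_density 5 (real n + c) s / (real n + c) ^ 6) (1 / (real n + c) ^ 6)"
      by (intro has_bochner_integral_divide_zero) 
    then show ?thesis by (simp add: eq)
  qed
  show ?thesis unfolding hausdorff_moment_seq_def
  proof (intro conjI exI[of _ M] allI)
    show "0 < 1 / (real n + c) ^ 6" for n using c by simp
    show "sets M = sets borel" by (simp add: M_def)
    have "emeasure M (space M) = emeasure D UNIV"
      by (simp add: M_def emeasure_distr D_def)
    also have "\<dots> = (\<integral>\<^sup>+ s. f s \<partial>lborel)"
      by (simp add: D_def emeasure_density)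
    also have "\<dots> = ennreal (1 / c ^ 6)"
      using nn_integral_eq_integrable[of f lborel "1 / c ^ 6"] key[of 0] fnn c
      by (simp add: has_bochner_integral_iff)
    finally show "finite_measure M" by (intro finite_measureI) simp
    have "emeasure M (- {0..1}) = emeasure D {s. exp (- s) \<notin> {0..1}}"
      by (simp add: M_def emeasure_distr D_def vimage_def Compl_eq)
    also have "\<dots> = (\<integral>\<^sup>+ s. ennreal (f s) * indicator {s. exp (- s) \<notin> {0..1}} s \<partial>lborel)"
      by (simp add: D_def emeasure_density)
    also have "\<dots> = (\<integral>\<^sup>+ s. 0 \<partial>(lborel::real measure))"
      by (rule nn_integral_cong) (auto simp: f_def erlang_density_def indicator_def)
    finally show "emeasure M (- {0..1}) = 0" by simp
    have "has_bochner_integral D (\<lambda>s. exp (- s) ^ n) (1 / (real n + c) ^ 6)" for n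
      unfolding D_def using key[of n] fnn
      by (intro has_bochner_integral_density) auto
    then have "has_bochner_integral M (\<lambda>t. t ^ n) (1 / (real n + c) ^ 6)" for n
      unfolding M_def by (intro has_bochner_integral_distr) (auto simp: D_def)
    then show "integrable M (\<lambda>t. t ^ n)" "1 / (real n + c) ^ 6 = (\<integral>t. t ^ n \<partial>M)" for n
      by (simp_all add: has_bochner_integral_iff)
  qed
qed

lemma lagrange_pf:
  fixes S :: "'a::field set"
  assumes "finite S" "S \<noteq> {}" "x \<notin> S"
  shows "1 / (\<Prod>\<rho>\<in>S. (x - \<rho>)) = (\<Sum>\<rho>\<in>S. 1 / ((\<Prod>\<sigma>\<in>S-{\<rho>}. (\<rho> - \<sigma>)) * (x - \<rho>)))"
  using assms
proof (induction S arbitrary: x rule: finite_ne_induct)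
  case singleton
  then show ?case by simp
next
  case (insert a S)
  define B where "B \<rho> = 1 / (\<Prod>\<sigma>\<in>S-{\<rho>}. (\<rho> - \<sigma>))" for \<rho>
  have xa: "x \<noteq> a" "x \<notin> S" using insert.prems by auto
  have IHx: "1 / (\<Prod>\<rho>\<in>S. (x - \<rho>)) = (\<Sum>\<rho>\<in>S. B \<rho> / (x - \<rho>))"
    using insert.IH[OF xa(2)] by (simp add: B_def)
  have IHa: "1 / (\<Prod>\<rho>\<in>S. (a - \<rho>)) = (\<Sum>\<rho>\<in>S. B \<rho> / (a - \<rho>))"
    using insert.IH[OF insert.hyps(3)] by (simp add: B_def)
  have diff: "\<rho> \<in> S \<Longrightarrow> \<rho> \<noteq> a" "\<rho> \<in> S \<Longrightarrow> x \<noteq> \<rho>" for \<rho> using insert.hyps xa by auto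
  have "1 / (\<Prod>\<rho>\<in>insert a S. (x - \<rho>)) = (1 / (x - a)) * (\<Sum>\<rho>\<in>S. B \<rho> / (x - \<rho>))"
    using insert.hyps xa IHx[symmetric] by simp
  also have "\<dots> = (\<Sum>\<rho>\<in>S. B \<rho> / ((\<rho> - a) * (x - \<rho>))) + (1 / (x - a)) * (\<Sum>\<rho>\<in>S. B \<rho> / (a - \<rho>))"
  proof -
    have "(1 / (x - a)) * (B \<rho> / (x - \<rho>)) = B \<rho> / ((\<rho> - a) * (x - \<rho>)) + (1 / (x - a)) * (B \<rho> / (a - \<rho>))"
      if "\<rho> \<in> S" for \<rho>
    proof -
      have nz: "\<rho> - a \<noteq> 0" "x - \<rho> \<noteq> 0" "x - a \<noteq> 0" "a - \<rho> \<noteq> 0" using diff[OF that] xa by auto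
      show ?thesis using nz by (simp add: divide_simps) (simp add: algebra_simps)
    qed
    then show ?thesis
      by (simp add: sum_distrib_left sum.distrib[symmetric])
  qed
  also have "\<dots> = (\<Sum>\<rho>\<in>S. B \<rho> / ((\<rho> - a) * (x - \<rho>))) + 1 / ((\<Prod>\<sigma>\<in>S. (a - \<sigma>)) * (x - a))"
    using IHa[symmetric] by simp
  also have "\<dots> = (\<Sum>\<rho>\<in>insert a S. 1 / ((\<Prod>\<sigma>\<in>insert a S-{\<rho>}. (\<rho> - \<sigma>)) * (x - \<rho>)))"
  proof -
    have "insert a S - {a} = S" using insert.hyps by auto
    moreover have "(\<Prod>\<sigma>\<in>insert a S-{\<rho>}. (\<rho> - \<sigma>)) = (\<rho> - a) * (\<Prod>\<sigma>\<in>S-{\<rho>}. (\<rho> - \<sigma>))"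
      if "\<rho> \<in> S" for \<rho>
    proof -
      have "insert a S - {\<rho>} = insert a (S - {\<rho>})" using diff[OF that] by auto
      then show ?thesis using insert.hyps by simp
    qed
    ultimately show ?thesis using insert.hyps
      by (simp add: B_def add.commute mult_ac)
  qed
  finally show ?case .
qed

lemma powr_has_integral_01:
  fixes z :: complex assumes "Re z > 0"
  shows "((\<lambda>t. of_real t powr (z - 1)) has_integral (1 / z)) {0..1}"
proof -
  have "((\<lambda>t. complex_of_real t powr (z - 1)) has_integral
            (of_real 1 powr z / z - of_real 0 powr z / z)) {0..1}" using assms
      by (intro fundamental_theorem_of_calculus_interior)
         (auto intro!: continuous_intros derivative_eq_intros has_vector_derivative_real_field)
  thus ?thesis by simp
qed

lemma p_c_1_closed:
  "p_c 1 n = (let m = real n + 3/2 in m * (m^2 - 1/4) * (m^4 - 3/2 * m^2 + 31/48) / 7)"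
  by (induction n) (simp_all add: p_c_def Let_def field_simps power_def)

definition "z0 = Complex (3/4) (sqrt 3 / 6)"
definition "mu = csqrt z0"
definition "Rset = {0, 1/2, -1/2, -mu, -cnj mu}"
definition "Sset = insert mu (insert (cnj mu) Rset)"
definition "Acoef \<rho> = 7 / (\<Prod>\<sigma>\<in>Sset-{\<rho>}. (\<rho> - \<sigma>))"
definition "Wf (t::real) = (\<Sum>\<rho>\<in>Sset. Acoef \<rho> * of_real t powr (1/2 - \<rho>))"
definition "wr t = Re (Wf t)"

lemma mu_sq: "mu^2 = z0" by (simp add: mu_def)

lemma mu_props: "Re mu > 1/2" "Re mu < 1" "Im mu > 0"
proof -
  define a where "a = Re mu"
  define b where "b = Im mu"
  have s3: "sqrt 3 * sqrt 3 = (3::real)" by simp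
  have s3p: "sqrt 3 > (0::real)" by simp
  have s3l: "sqrt 3 < (2::real)" by (rule real_less_lsqrt) auto
  have e1: "a^2 - b^2 = 3/4" using arg_cong[OF mu_sq, of Re]
    by (simp add: a_def b_def z0_def power2_eq_square)
  have e2: "2 * a * b = sqrt 3 / 6" using arg_cong[OF mu_sq, of Im]
    by (simp add: a_def b_def z0_def power2_eq_square mult_ac)
  have a0: "a \<ge> 0" unfolding a_def mu_def by (rule Re_csqrt)
  have ab: "a * b > 0" using e2 s3p by linarith
  then have "a > 0" "b > 0" using a0 by (auto simp: zero_less_mult_iff)
  have "a^2 \<ge> 3/4" using e1 zero_le_power2[of b] by linarith
  have "a > 1/2"
  proof (rule ccontr)
    assume "\<not> a > 1/2"
    then have "a^2 \<le> (1/2)^2" using \<open>a > 0\<close> by (intro power_mono) auto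
    then show False using \<open>a^2 \<ge> 3/4\<close> by (simp add: power2_eq_square)
  qed
  moreover have "b < 1/3"
  proof -
    have "b = sqrt 3 / (12 * a)" using e2 \<open>a > 0\<close> by (simp add: field_simps)
    also have "\<dots> < 2 / (12 * (1/2))" using s3l \<open>a > 1/2\<close> s3p
      by (intro frac_less) auto
    finally show ?thesis by simp
  qed
  moreover have "a < 1"
  proof -
    have "b^2 < (1/3)^2" using \<open>b < 1/3\<close> \<open>b > 0\<close> by (intro power_strict_mono) auto
    then have "a^2 < 1" using e1 by (simp add: power2_eq_square)
    show ?thesis
    proof (rule ccontr)
      assume "\<not> a < 1"
      then have "1 \<le> a^2" by (simp add: one_le_power)
      then show False using \<open>a^2 < 1\<close> by simp
    qed
  qed
  ultimately show "Re mu > 1/2" "Re mu < 1" "Im mu > 0" using \<open>b > 0\<close> by (auto simp: a_def b_def)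
qed

lemma distinct_S [simp]:
  "mu \<noteq> 0" "mu \<noteq> 1/2" "mu \<noteq> -1/2" "mu \<noteq> -mu" "mu \<noteq> cnj mu" "mu \<noteq> -cnj mu"
  "cnj mu \<noteq> 0" "cnj mu \<noteq> 1/2" "cnj mu \<noteq> -1/2" "cnj mu \<noteq> -mu" "cnj mu \<noteq> -cnj mu" "cnj mu \<noteq> mu"
  "-mu \<noteq> 0" "-mu \<noteq> 1/2" "-mu \<noteq> -1/2" "-mu \<noteq> -cnj mu" "-mu \<noteq> mu" "-mu \<noteq> cnj mu"
  "-cnj mu \<noteq> 0" "-cnj mu \<noteq> 1/2" "-cnj mu \<noteq> -1/2" "-cnj mu \<noteq> -mu" "-cnj mu \<noteq> mu" "-cnj mu \<noteq> cnj mu"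
  "0 \<noteq> mu" "1/2 \<noteq> mu" "-1/2 \<noteq> mu" "0 \<noteq> cnj mu" "1/2 \<noteq> cnj mu" "-1/2 \<noteq> cnj mu"
  "0 \<noteq> -mu" "1/2 \<noteq> -mu" "-1/2 \<noteq> -mu" "0 \<noteq> -cnj mu" "1/2 \<noteq> -cnj mu" "-1/2 \<noteq> -cnj mu"
  using mu_props by (auto simp: complex_eq_iff)

lemma finite_S [simp]: "finite Sset" "finite Rset" by (auto simp: Sset_def Rset_def)

lemma notin_S:
  "mu \<notin> insert (cnj mu) Rset" "cnj mu \<notin> Rset" "(0::complex) \<notin> {1/2, -1/2, -mu, -cnj mu}"
  "(1/2::complex) \<notin> {-1/2, -mu, -cnj mu}" "(-1/2::complex) \<notin> {-mu, -cnj mu}" "-mu \<notin> {-cnj mu}"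
  using mu_props by (auto simp: Rset_def complex_eq_iff)

lemma prod_Sset: "prod f Sset = f mu * f (cnj mu) * (f 0 * (f (1/2) * (f (-1/2) * (f (-mu) * f (-cnj mu)))))"
proof -
  have "prod f Sset = f mu * (f (cnj mu) * prod f Rset)"
    unfolding Sset_def by (simp only: prod.insert[OF _ notin_S(1)] prod.insert[OF _ notin_S(2)] finite_S finite_insert)
  also have "prod f Rset = f 0 * (f (1/2) * (f (-1/2) * (f (-mu) * f (-cnj mu))))"
    unfolding Rset_def
    by (simp only: prod.insert[OF _ notin_S(3)] prod.insert[OF _ notin_S(4)] prod.insert[OF _ notin_S(5)]
          prod.insert[OF _ notin_S(6)] finite.emptyI finite_insert prod.empty mult_1_right) simp
  finally show ?thesis by (simp only: mult.assoc)
qed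

lemma sum_Sset: "sum f Sset = f mu + f (cnj mu) + sum f Rset"
  unfolding Sset_def
  by (simp only: sum.insert[OF _ notin_S(1)] sum.insert[OF _ notin_S(2)] finite_S finite_insert add.assoc)

lemma prod_S: "(\<Prod>\<rho>\<in>Sset. (x - \<rho>)) = x * (x^2 - 1/4) * (x^4 - 3/2 * x^2 + 31/48)"
proof -
  have P: "(\<Prod>\<rho>\<in>Sset. (x - \<rho>)) = (x - mu) * (x - cnj mu) * x * (x - 1/2) * (x + 1/2) * (x + mu) * (x + cnj mu)"
    by (simp add: prod_Sset mult_ac)
  have c2: "(cnj mu)^2 = cnj z0" by (simp flip: mu_sq)
  have z1: "z0 + cnj z0 = 3/2" by (simp add: z0_def complex_eq_iff)
  have z2: "z0 * cnj z0 = 31/48" by (simp add: z0_def complex_eq_iff)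
  have "(x - mu) * (x + mu) = x^2 - z0" by (simp add: algebra_simps power2_eq_square flip: mu_sq)
  moreover have "(x - cnj mu) * (x + cnj mu) = x^2 - cnj z0" by (simp add: algebra_simps power2_eq_square flip: c2)
  moreover have "(x^2 - z0) * (x^2 - cnj z0) = x^4 - (z0 + cnj z0) * x^2 + z0 * cnj z0"
    by (simp add: algebra_simps power2_eq_square power4_eq_xxxx)
  ultimately have "(x - mu) * (x + mu) * ((x - cnj mu) * (x + cnj mu)) = x^4 - 3/2 * x^2 + 31/48"
    using z1 z2 by simp
  moreover have "(x - mu) * (x - cnj mu) * x * (x - 1/2) * (x + 1/2) * (x + mu) * (x + cnj mu) =
     (x * ((x - 1/2) * (x + 1/2))) * ((x - mu) * (x + mu) * ((x - cnj mu) * (x + cnj mu)))"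
    by (simp only: mult_ac)
  moreover have "(x - 1/2) * (x + 1/2) = x^2 - 1/4" by (simp add: algebra_simps power2_eq_square)
  ultimately show ?thesis unfolding P by simp
qed

lemma Re_R: assumes "\<rho> \<in> Rset" shows "Re \<rho> \<le> 1/2"
proof -
  have "\<rho> = 0 \<or> \<rho> = 1/2 \<or> \<rho> = -1/2 \<or> \<rho> = -mu \<or> \<rho> = -cnj mu"
    using assms by (simp only: Rset_def insert_iff empty_iff simp_thms)
  then show ?thesis using mu_props by (elim disjE; (hypsubst_thin, simp))
qed

lemma Re_S: assumes "\<rho> \<in> Sset" shows "Re \<rho> \<le> Re mu"
proof -
  have "\<rho> = mu \<or> \<rho> = cnj mu \<or> \<rho> \<in> Rset"
    using assms by (simp only: Sset_def insert_iff)
  then show ?thesis using mu_props Re_R[of \<rho>] by (elim disjE) simp_all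
qed

lemma p_c_1_pos: "p_c 1 n > 0"
  unfolding p_c_def by (intro sum_pos2[of _ 0]) auto

lemma real_notin_S: "x \<ge> 1 \<Longrightarrow> complex_of_real x \<notin> Sset"
  using mu_props by (auto simp: Sset_def Rset_def complex_eq_iff)

lemma moment_complex:
  "((\<lambda>t. of_real (t ^ n) * Wf t) has_integral of_real (1 / p_c 1 n)) {0..1}"
proof -
  define x where "x = complex_of_real (real n + 3/2)"
  have xS: "x \<notin> Sset" unfolding x_def by (rule real_notin_S) simp
  have Sne: "Sset \<noteq> {}" by (simp add: Sset_def)
  have pc: "complex_of_real (p_c 1 n) = (\<Prod>\<rho>\<in>Sset. (x - \<rho>)) / 7"
    unfolding prod_S p_c_1_closed x_def Let_def by simp
  have "of_real (1 / p_c 1 n) = 7 * (1 / (\<Prod>\<rho>\<in>Sset. (x - \<rho>)))"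
    using pc p_c_1_pos[of n] xS by (simp add: field_simps)
  also have "\<dots> = (\<Sum>\<rho>\<in>Sset. Acoef \<rho> / (x - \<rho>))"
    unfolding lagrange_pf[OF finite_S(1) Sne xS] by (simp add: sum_distrib_left Acoef_def)
  finally have eq: "of_real (1 / p_c 1 n) = (\<Sum>\<rho>\<in>Sset. Acoef \<rho> / (x - \<rho>))" .
  have each: "((\<lambda>t. of_real (t ^ n) * (Acoef \<rho> * of_real t powr (1/2 - \<rho>))) has_integral Acoef \<rho> / (x - \<rho>)) {0..1}"
    if \<rho>: "\<rho> \<in> Sset" for \<rho>
  proof -
    have "Re (x - \<rho>) > 0" using Re_S[OF \<rho>] mu_props by (simp add: x_def)
    from has_integral_mult_right[OF powr_has_integral_01[OF this], of "Acoef \<rho>"]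
    have "((\<lambda>t. Acoef \<rho> * of_real t powr (x - \<rho> - 1)) has_integral Acoef \<rho> / (x - \<rho>)) {0..1}"
      by simp
    moreover have "Acoef \<rho> * of_real t powr (x - \<rho> - 1) = of_real (t ^ n) * (Acoef \<rho> * of_real t powr (1/2 - \<rho>))"
      if "t \<in> {0..1}" for t :: real
    proof (cases "t = 0")
      case True then show ?thesis by simp
    next
      case False
      have xe: "x - \<rho> - 1 = of_nat n + (1/2 - \<rho>)" by (simp add: x_def)
      have "of_real t powr (x - \<rho> - 1) = of_real t powr of_nat n * of_real t powr (1/2 - \<rho>)"
        unfolding xe by (rule powr_add)
      also have "of_real t powr of_nat n = (of_real t :: complex) ^ n" using False by (simp add: powr_nat')
      finally show ?thesis by simp
    qed
    ultimately show ?thesis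
      by (subst has_integral_cong[symmetric]) auto
  qed
  have "((\<lambda>t. \<Sum>\<rho>\<in>Sset. of_real (t ^ n) * (Acoef \<rho> * of_real t powr (1/2 - \<rho>))) has_integral (\<Sum>\<rho>\<in>Sset. Acoef \<rho> / (x - \<rho>))) {0..1}"
    by (intro has_integral_sum finite_S each)
  then show ?thesis unfolding eq Wf_def by (simp add: sum_distrib_left)
qed

lemma moment_real:
  "((\<lambda>t. t ^ n * wr t) has_integral (1 / p_c 1 n)) {0..1}"
proof -
  have "((Re \<circ> (\<lambda>t. of_real (t ^ n) * Wf t)) has_integral Re (of_real (1 / p_c 1 n))) {0..1}"
    by (rule has_integral_linear[OF moment_complex bounded_linear_Re])
  then show ?thesis by (simp add: o_def wr_def)
qed

lemma wr_integrable: "wr integrable_on {0..1}"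
  using moment_real[of 0] by (auto simp: integrable_on_def)

lemma wr_abs_integrable: "wr absolutely_integrable_on {0..1}"
proof -
  have bound: "norm (wr t) \<le> (\<Sum>\<rho>\<in>Sset. cmod (Acoef \<rho>) * t powr (1/2 - Re \<rho>))" if "t \<in> {0..1}" for t
  proof -
    have "norm (wr t) \<le> cmod (Wf t)" unfolding wr_def by (simp add: abs_Re_le_cmod)
    also have "\<dots> \<le> (\<Sum>\<rho>\<in>Sset. cmod (Acoef \<rho> * of_real t powr (1/2 - \<rho>)))"
      unfolding Wf_def by (rule norm_sum)
    also have "\<dots> = (\<Sum>\<rho>\<in>Sset. cmod (Acoef \<rho>) * t powr (1/2 - Re \<rho>))"
      using that by (intro sum.cong refl) (simp add: norm_mult norm_powr_real_powr)
    finally show ?thesis .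
  qed
  have bint: "(\<lambda>t. \<Sum>\<rho>\<in>Sset. cmod (Acoef \<rho>) * t powr (1/2 - Re \<rho>)) integrable_on {0..1}"
  proof (intro integrable_sum finite_S)
    fix \<rho> assume "\<rho> \<in> Sset"
    then have "1/2 - Re \<rho> > -1" using Re_S mu_props by force
    from has_integral_powr_from_0[OF this, of 1]
    have "(\<lambda>t. t powr (1/2 - Re \<rho>)) integrable_on {0..1}" by (auto simp: integrable_on_def)
    then show "(\<lambda>t. cmod (Acoef \<rho>) * t powr (1/2 - Re \<rho>)) integrable_on {0..1}"
      by (rule integrable_on_mult_right)
  qed
  show ?thesis by (rule absolutely_integrable_integrable_bound[OF bound wr_integrable bint])
qed

lemma wr_cont: assumes t: "t > 0" shows "isCont wr t"
proof -
  have c: "isCont (\<lambda>x. complex_of_real x powr (1/2 - \<rho>)) t" for \<rho>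
    by (rule isCont_powr_complex) (use t in \<open>auto simp: complex_nonpos_Reals_iff\<close>)
  have "isCont Wf t" unfolding Wf_def by (intro continuous_intros c)
  then show ?thesis unfolding wr_def by (rule isCont_Re)
qed

lemma S_minus_mu: "Sset - {mu} = insert (cnj mu) Rset"
  using notin_S(1) unfolding Sset_def by blast

lemma S_minus_cnj: "Sset - {cnj mu} = insert mu Rset"
  using notin_S(1,2) distinct_S(12) unfolding Sset_def by blast

lemma cnj_Rset: "cnj ` Rset = Rset"
  unfolding Rset_def by (simp add: image_insert insert_commute)

lemma Acoef_cnj: "Acoef (cnj mu) = cnj (Acoef mu)"
proof -
  have "cnj (\<Prod>\<sigma>\<in>insert (cnj mu) Rset. (mu - \<sigma>)) = (\<Prod>\<sigma>\<in>insert (cnj mu) Rset. (cnj mu - cnj \<sigma>))"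
    by simp
  also have "\<dots> = (\<Prod>\<sigma>\<in>cnj ` insert (cnj mu) Rset. (cnj mu - \<sigma>))"
  proof -
    have ri: "prod g (cnj ` A) = prod (\<lambda>\<sigma>. g (cnj \<sigma>)) A" for g :: "complex \<Rightarrow> complex" and A
      using prod.reindex[of cnj A g] by (simp add: inj_on_def o_def)
    show ?thesis by (simp only: ri)
  qed
  also have "cnj ` insert (cnj mu) Rset = insert mu Rset" using cnj_Rset by simp
  finally show ?thesis unfolding Acoef_def S_minus_mu S_minus_cnj by simp
qed

lemma Acoef_mu_nz: "Acoef mu \<noteq> 0"
  unfolding Acoef_def S_minus_mu using notin_S(1) by auto

lemma wr_exp: 
  assumes u: "u > 0"
  shows "wr (exp (- u)) \<le> 2 * (cmod (Acoef mu) * exp ((Re mu - 1/2) * u) * cos (Arg (Acoef mu) + Im mu * u))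
           + (\<Sum>\<rho>\<in>Rset. cmod (Acoef \<rho>))"
proof -
  define E where "E \<rho> = exp ((\<rho> - 1/2) * complex_of_real u)" for \<rho> :: complex
  have pw: "of_real (exp (- u)) powr (1/2 - \<rho>) = E \<rho>" for \<rho>
    by (simp add: powr_def E_def Ln_of_real algebra_simps)
  have W: "Wf (exp (- u)) = Acoef mu * E mu + Acoef (cnj mu) * E (cnj mu) + (\<Sum>\<rho>\<in>Rset. Acoef \<rho> * E \<rho>)"
    unfolding Wf_def pw sum_Sset ..
  have Ec: "E (cnj mu) = cnj (E mu)" by (simp add: E_def exp_cnj)
  define X where "X = Acoef mu * E mu"
  have pair: "Re (Acoef mu * E mu + Acoef (cnj mu) * E (cnj mu)) = 2 * Re X"
    by (simp add: Acoef_cnj Ec X_def)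
  have "X = rcis (cmod (Acoef mu)) (Arg (Acoef mu)) * rcis (exp ((Re mu - 1/2) * u)) (Im mu * u)"
    unfolding X_def rcis_cmod_Arg by (simp add: E_def exp_eq_polar rcis_def algebra_simps)
  also have "\<dots> = rcis (cmod (Acoef mu) * exp ((Re mu - 1/2) * u)) (Arg (Acoef mu) + Im mu * u)"
    by (rule rcis_mult)
  finally have ReX: "Re X = cmod (Acoef mu) * exp ((Re mu - 1/2) * u) * cos (Arg (Acoef mu) + Im mu * u)"
    by simp
  have rest: "Re (\<Sum>\<rho>\<in>Rset. Acoef \<rho> * E \<rho>) \<le> (\<Sum>\<rho>\<in>Rset. cmod (Acoef \<rho>))"
  proof -
    have "Re (\<Sum>\<rho>\<in>Rset. Acoef \<rho> * E \<rho>) \<le> cmod (\<Sum>\<rho>\<in>Rset. Acoef \<rho> * E \<rho>)"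
      by (rule complex_Re_le_cmod)
    also have "\<dots> \<le> (\<Sum>\<rho>\<in>Rset. cmod (Acoef \<rho> * E \<rho>))" by (rule norm_sum)
    also have "\<dots> \<le> (\<Sum>\<rho>\<in>Rset. cmod (Acoef \<rho>))"
    proof (intro sum_mono)
      fix \<rho> assume "\<rho> \<in> Rset"
      then have "Re \<rho> \<le> 1/2" by (rule Re_R)
      then have "cmod (E \<rho>) \<le> 1" using u
        by (simp add: E_def mult_nonpos_nonneg)
      then show "cmod (Acoef \<rho> * E \<rho>) \<le> cmod (Acoef \<rho>)"
        by (simp add: norm_mult mult_left_le)
    qed
    finally show ?thesis .
  qed
  show ?thesis
    unfolding wr_def W using pair ReX rest by simp
qed

lemma wr_neg: "\<exists>t0. 0 < t0 \<and> t0 < 1 \<and> wr t0 < 0"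
proof -
  define A where "A = cmod (Acoef mu)"
  define C where "C = (\<Sum>\<rho>\<in>Rset. cmod (Acoef \<rho>))"
  define a where "a = Re mu - 1/2"
  define b where "b = Im mu"
  define th where "th = Arg (Acoef mu)"
  have A: "A > 0" using Acoef_mu_nz by (simp add: A_def)
  have a: "a > 0" using mu_props by (simp add: a_def)
  have b: "b > 0" using mu_props by (simp add: b_def)
  have th: "- pi < th" "th \<le> pi" using Arg_bounded by (auto simp: th_def)
  obtain k :: nat where k: "C * b / (2 * A * a * (2 * pi)) < real k"
    using reals_Archimedean2 by blast
  define u where "u = (pi - th + 2 * pi * real k) / b"
  have u1: "u \<ge> 2 * pi * real k / b" unfolding u_def using th b by (intro divide_right_mono) auto
  have "C * b / (2 * A * a * (2 * pi)) \<ge> 0" using A a b by (simp add: C_def sum_nonneg)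
  then have kpos: "real k > 0" using k by linarith
  have pos2: "2 * pi * real k / b > 0" using kpos b by simp
  have upos: "u > 0" using u1 pos2 by linarith
  have cosv: "cos (th + b * u) = -1"
  proof -
    have "th + b * u = pi + 2 * real k * pi" unfolding u_def using b by (simp add: field_simps)
    then show ?thesis by simp
  qed
  have "C / (2 * A * a) < u"
  proof -
    have "C / (2 * A * a) = (C * b / (2 * A * a * (2 * pi))) * (2 * pi / b)"
      using A a b by (simp add: field_simps)
    also have "\<dots> < real k * (2 * pi / b)"
      using k b by (intro mult_strict_right_mono) auto
    also have "\<dots> \<le> u" using u1 by (simp add: field_simps)
    finally show ?thesis .
  qed
  then have "C < 2 * A * (a * u)" using A a by (simp add: field_simps)
  also have "a * u \<le> exp (a * u)" using exp_ge_add_one_self[of "a * u"] by linarith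
  then have "2 * A * (a * u) \<le> 2 * A * exp (a * u)" using A by simp
  finally have big: "C < 2 * A * exp (a * u)" .
  have "wr (exp (- u)) \<le> 2 * (A * exp (a * u) * cos (th + b * u)) + C"
    using wr_exp[OF upos] by (simp add: A_def C_def a_def b_def th_def)
  also have "\<dots> < 0" using big cosv by simp
  finally have "wr (exp (- u)) < 0" .
  moreover have "exp (- u) < 1" "exp (- u) > 0" using upos by auto
  ultimately show ?thesis by blast
qed

lemma certificate:
  "\<exists>q d. (\<forall>t\<in>{0..1::real}. 0 \<le> (\<Sum>j\<le>d. q j * t ^ j)) \<and> (\<Sum>j\<le>d. q j * (1 / p_c 1 j)) < 0"
proof -
  obtain t0 where t0: "0 < t0" "t0 < 1" "wr t0 < 0" using wr_neg by blast
  define \<eta> where "\<eta> = - wr t0 / 2"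
  have eta: "\<eta> > 0" using t0 by (simp add: \<eta>_def)
  obtain d where d: "d > 0" "\<And>t. dist t t0 < d \<Longrightarrow> dist (wr t) (wr t0) < \<eta>"
    using wr_cont[OF t0(1)] eta unfolding continuous_at_eps_delta by blast
  define h where "h = min d (min t0 (1 - t0))"
  have h: "h > 0" "h \<le> d" "h \<le> t0" "h \<le> 1 - t0" using d t0 by (auto simp: h_def)
  define g where "g t = max 0 (h - \<bar>t - t0\<bar>)" for t :: real
  have g_cont: "continuous_on UNIV g" unfolding g_def by (intro continuous_intros)
  have g_nn: "g t \<ge> 0" for t by (simp add: g_def)
  have gw_le: "g t * wr t \<le> - \<eta> * g t" for t
  proof (cases "\<bar>t - t0\<bar> < h")
    case True
    then have "dist t t0 < d" using h by (simp add: dist_real_def)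
    then have "dist (wr t) (wr t0) < \<eta>" by (rule d(2))
    then have "wr t < wr t0 + \<eta>" by (simp add: dist_real_def abs_less_iff)
    then have "wr t < - \<eta>" by (simp add: \<eta>_def)
    then have "g t * wr t \<le> g t * (- \<eta>)" using g_nn[of t] by (intro mult_left_mono) auto
    then show ?thesis by (simp add: mult.commute)
  next
    case False then show ?thesis by (simp add: g_def)
  qed
  have g_int: "g integrable_on {a..b}" for a b
    using g_cont by (intro integrable_continuous_interval) (auto intro: continuous_on_subset)
  define G where "G = integral {0..1} g"
  have "h * (h / 2) \<le> integral {t0 - h/2..t0 + h/2} g"
  proof -
    have "integral {t0 - h/2..t0 + h/2} (\<lambda>t. h / 2) \<le> integral {t0 - h/2..t0 + h/2} g"
      by (intro integral_le g_int integrable_const_ivl) (auto simp: g_def split: abs_split)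
    then show ?thesis using h by (simp add: content_real)
  qed
  also have "\<dots> \<le> G" unfolding G_def
    using h g_nn by (intro integral_subset_le g_int) auto
  finally have G0: "h * (h / 2) \<le> G" .
  have "h * (h / 2) > 0" using h by simp
  then have G: "G > 0" using G0 by linarith
  have wabs: "wr absolutely_integrable_on {0..1}" by (rule wr_abs_integrable)
  have gw_abs: "(\<lambda>t. g t * wr t) absolutely_integrable_on {0..1}"
  proof (rule absolutely_integrable_bounded_measurable_product_real[OF _ _ _ wabs])
    show "g \<in> borel_measurable (lebesgue_on {0..1})"
      by (rule continuous_imp_measurable_on_sets_lebesgue) (auto intro: continuous_on_subset[OF g_cont])
    show "bounded (g ` {0..1})"
      by (intro compact_imp_bounded compact_continuous_image) (auto intro: continuous_on_subset[OF g_cont])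
  qed auto
  have gw_int: "(\<lambda>t. g t * wr t) integrable_on {0..1}"
    using gw_abs by (rule absolutely_integrable_on_def[THEN iffD1, THEN conjunct1])
  have absw_int: "(\<lambda>t. \<bar>wr t\<bar>) integrable_on {0..1}"
    using wabs by (auto simp: absolutely_integrable_on_def)
  define Iw where "Iw = integral {0..1} (\<lambda>t. \<bar>wr t\<bar>)"
  have Iw: "Iw \<ge> 0" unfolding Iw_def by (intro integral_nonneg absw_int) auto
  have gw: "integral {0..1} (\<lambda>t. g t * wr t) \<le> - \<eta> * G"
  proof -
    have "integral {0..1} (\<lambda>t. g t * wr t) \<le> integral {0..1} (\<lambda>t. - \<eta> * g t)"
      by (intro integral_le gw_int integrable_on_mult_right g_int gw_le)
    then show ?thesis by (simp add: G_def)
  qed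
  define \<epsilon> where "\<epsilon> = \<eta> * G / (4 * (Iw + 1))"
  have eps: "\<epsilon> > 0" using eta G Iw by (simp add: \<epsilon>_def)
  obtain p where p: "real_polynomial_function p" "\<And>t. t \<in> {0..1} \<Longrightarrow> \<bar>g t - p t\<bar> < \<epsilon>"
    using Stone_Weierstrass_real_polynomial_function[of "{0..1::real}" g \<epsilon>] eps
      continuous_on_subset[OF g_cont] by auto
  obtain a n where pa: "p = (\<lambda>x. \<Sum>i\<le>n. a i * x ^ i)"
    using p(1) unfolding real_polynomial_function_iff_sum by blast
  define q where "q j = a j + (if j = 0 then \<epsilon> else 0)" for j
  have qsum: "(\<Sum>j\<le>n. q j * t ^ j) = p t + \<epsilon>" for t
  proof -
    have "(\<Sum>j\<le>n. (if j = 0 then \<epsilon> else 0) * t ^ j) = (\<Sum>j\<le>n. (if j = 0 then \<epsilon> else 0))"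
      by (rule sum.cong) auto
    also have "\<dots> = \<epsilon>" by (simp add: sum.delta)
    finally show ?thesis unfolding q_def pa by (simp add: distrib_right sum.distrib)
  qed
  have nonneg: "\<forall>t\<in>{0..1::real}. 0 \<le> (\<Sum>j\<le>n. q j * t ^ j)"
  proof
    fix t :: real assume "t \<in> {0..1}"
    then have "\<bar>g t - p t\<bar> < \<epsilon>" by (rule p(2))
    then show "0 \<le> (\<Sum>j\<le>n. q j * t ^ j)" using g_nn[of t] unfolding qsum by linarith
  qed
  have hi: "((\<lambda>t. \<Sum>j\<le>n. q j * (t ^ j * wr t)) has_integral (\<Sum>j\<le>n. q j * (1 / p_c 1 j))) {0..1}"
    by (intro has_integral_sum finite_atMost has_integral_mult_right moment_real)
  have eqf: "(\<lambda>t. \<Sum>j\<le>n. q j * (t ^ j * wr t)) = (\<lambda>t. (p t + \<epsilon>) * wr t)"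
    by (rule ext) (simp add: qsum[symmetric] sum_distrib_right sum_distrib_left mult_ac)
  have L: "(\<Sum>j\<le>n. q j * (1 / p_c 1 j)) = integral {0..1} (\<lambda>t. (p t + \<epsilon>) * wr t)"
    using hi unfolding eqf by (simp add: integral_unique)
  have pw_int: "(\<lambda>t. (p t + \<epsilon>) * wr t) integrable_on {0..1}"
    using hi unfolding eqf by (auto simp: integrable_on_def)
  have diff_int: "(\<lambda>t. (p t + \<epsilon>) * wr t - g t * wr t) integrable_on {0..1}"
    by (intro integrable_diff pw_int gw_int)
  have "integral {0..1} (\<lambda>t. (p t + \<epsilon>) * wr t) - integral {0..1} (\<lambda>t. g t * wr t)
        = integral {0..1} (\<lambda>t. (p t + \<epsilon>) * wr t - g t * wr t)"
    by (rule Henstock_Kurzweil_Integration.integral_diff[symmetric, OF pw_int gw_int])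
  also have "\<dots> \<le> integral {0..1} (\<lambda>t. (2 * \<epsilon>) * \<bar>wr t\<bar>)"
  proof (intro integral_le diff_int integrable_on_mult_right absw_int)
    fix t :: real assume t: "t \<in> {0..1}"
    have "\<bar>p t + \<epsilon> - g t\<bar> \<le> 2 * \<epsilon>" using p(2)[OF t] eps by linarith
    then have "(p t + \<epsilon> - g t) * wr t \<le> (2 * \<epsilon>) * \<bar>wr t\<bar>"
    proof -
      have "(p t + \<epsilon> - g t) * wr t \<le> \<bar>p t + \<epsilon> - g t\<bar> * \<bar>wr t\<bar>" by (metis abs_ge_self abs_mult)
      also have "\<dots> \<le> (2 * \<epsilon>) * \<bar>wr t\<bar>" by (rule mult_right_mono) (use \<open>\<bar>p t + \<epsilon> - g t\<bar> \<le> 2 * \<epsilon>\<close> in auto)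
      finally show ?thesis .
    qed
    then show "(p t + \<epsilon>) * wr t - g t * wr t \<le> (2 * \<epsilon>) * \<bar>wr t\<bar>"
      by (simp add: algebra_simps)
  qed
  also have "\<dots> = 2 * \<epsilon> * Iw" by (simp add: Iw_def)
  finally have le1: "(\<Sum>j\<le>n. q j * (1 / p_c 1 j)) \<le> - \<eta> * G + 2 * \<epsilon> * Iw"
    using gw L by linarith
  have le2: "2 * \<epsilon> * Iw \<le> \<eta> * G / 2"
  proof -
    have "2 * \<epsilon> * Iw = (\<eta> * G / 2) * (Iw / (Iw + 1))" using Iw by (simp add: \<epsilon>_def field_simps)
    also have "\<dots> \<le> (\<eta> * G / 2) * 1" using Iw eta G by (intro mult_left_mono) auto
    finally show ?thesis by simp
  qed
  have le: "(\<Sum>j\<le>n. q j * (1 / p_c 1 j)) \<le> - \<eta> * G + \<eta> * G / 2" using le1 le2 by linarith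
  have "\<eta> * G > 0" using eta G by simp
  then have "(\<Sum>j\<le>n. q j * (1 / p_c 1 j)) < 0" using le by linarith
  with nonneg show ?thesis by blast
qed

lemma hms_nonneg:
  assumes h: "hausdorff_moment_seq x" and q: "\<forall>t\<in>{0..1::real}. 0 \<le> (\<Sum>j\<le>d. q j * t ^ j)"
  shows "0 \<le> (\<Sum>j\<le>d. q j * x j)"
proof -
  obtain M :: "real measure" where M: "sets M = sets borel" "finite_measure M" "emeasure M (- {0..1}) = 0"
    "\<And>n. integrable M (\<lambda>t. t ^ n)" "\<And>n. x n = (\<integral>t. t ^ n \<partial>M)"
    using h unfolding hausdorff_moment_seq_def by blast
  have "(\<Sum>j\<le>d. q j * x j) = (\<integral>t. (\<Sum>j\<le>d. q j * t ^ j) \<partial>M)"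
    using M(4) by (simp add: M(5) integral_sum integral_mult_right)
  also have "\<dots> \<ge> 0"
  proof (rule integral_nonneg_AE)
    have "- {0..1} \<in> null_sets M" using M(1,3) by (auto simp: null_sets_def)
    then show "AE t in M. 0 \<le> (\<Sum>j\<le>d. q j * t ^ j)"
      by (rule AE_I') (use q in auto)
  qed
  finally show ?thesis .
qed

lemma part2:
  "\<exists>\<delta>::real. \<delta> > 0 \<and>
            (\<forall>c. c > 0 \<and> 1 - \<delta> < c \<and> c < 1 + \<delta> \<longrightarrow>
                 \<not> hausdorff_moment_seq (\<lambda>n. 1 / p_c c n))"
proof -
  obtain q d where q: "\<forall>t\<in>{0..1::real}. 0 \<le> (\<Sum>j\<le>d. q j * t ^ j)"
    and neg: "(\<Sum>j\<le>d. q j * (1 / p_c 1 j)) < 0"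
    using certificate by blast
  define F where "F c = (\<Sum>j\<le>d. q j * (1 / p_c c j))" for c
  have pos: "p_c 1 j > 0" for j
    unfolding p_c_def by (intro sum_pos2[of _ 0]) auto
  have "isCont F 1"
    unfolding F_def p_c_def using pos unfolding p_c_def
    by (intro continuous_intros) (auto simp: less_imp_neq[symmetric])
  then have "(F \<longlongrightarrow> F 1) (at 1)" by (simp add: isCont_def)
  moreover have "F 1 < 0" using neg by (simp add: F_def)
  ultimately have "eventually (\<lambda>c. F c < 0) (at 1)"
    by (rule order_tendstoD)
  then obtain \<delta> where d: "\<delta> > 0" "\<And>c. c \<noteq> 1 \<Longrightarrow> dist c 1 < \<delta> \<Longrightarrow> F c < 0"
    unfolding eventually_at by blast
  show ?thesis
  proof (intro exI[of _ \<delta>] conjI allI impI notI)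
    fix c assume c: "c > 0 \<and> 1 - \<delta> < c \<and> c < 1 + \<delta>" and h: "hausdorff_moment_seq (\<lambda>n. 1 / p_c c n)"
    have "F c < 0"
    proof (cases "c = 1")
      case True then show ?thesis using \<open>F 1 < 0\<close> by simp
    next
      case False then show ?thesis using c by (intro d(2)) (auto simp: dist_real_def)
    qed
    moreover have "0 \<le> F c" unfolding F_def by (rule hms_nonneg[OF h q])
    ultimately show False by simp
  qed (use d in auto)
qed

theorem mainTheorem5:
  shows "(\<forall>c::real. c > 0 \<longrightarrow> hausdorff_moment_seq (\<lambda>n. 1 / (real n + c) ^ 6)) \<and>
         (\<exists>\<delta>::real. \<delta> > 0 \<and>
            (\<forall>c. c > 0 \<and> 1 - \<delta> < c \<and> c < 1 + \<delta> \<longrightarrow>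
                 \<not> hausdorff_moment_seq (\<lambda>n. 1 / p_c c n)))"
  using part1 part2 by blast

end
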